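(* Let $n\ge 3$, $0<m<\frac{n-2}{n}$, $\eta_0>0$, $\rho_1>0$, let $\beta<\frac{m\rho_1}{n-2-nm}$ and $\alpha=\frac{2\beta+\rho_1}{1-m}$. Then there exists a constant $\varepsilon>0$ such that the equation $$(f^m/m)_{rr}+\frac{n-1}{r}(f^m/m)_r+\alpha f+\beta r f_r=0,\quad f>0,$$ has a unique radially symmetric solution $f\in C^1([0,\varepsilon);\mathbb{R})\cap C^2((0,\varepsilon);\mathbb{R})$ in $B_\varepsilon$ (i.e. for $0<r<\varepsilon$) which satisfies $f(0)=\eta_0$, $f_r(0)=0$.
   Context: $B_R=\{x\in\mathbb{R}^n:|x|<R\}$; $r=|x|$ and $f_r$ is the radial derivative. *)

theory Defs
  imports "HOL-Analysis.Analysis"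
begin

definition radial_sol ::
  "nat \<Rightarrow> real \<Rightarrow> real \<Rightarrow> real \<Rightarrow> real \<Rightarrow> real \<Rightarrow> (real \<Rightarrow> real) \<Rightarrow> bool" where
  "radial_sol n m alpha beta eta0 eps f \<longleftrightarrow>
     (\<forall>r\<in>{0..<eps}. f r > 0) \<and>
     (\<exists>f' f''.
        (\<forall>r\<in>{0..<eps}. (f has_real_derivative f' r) (at r within {0..<eps})) \<and>
        continuous_on {0..<eps} f' \<and>
        (\<forall>r\<in>{0<..<eps}. (f' has_real_derivative f'' r) (at r)) \<and>
        continuous_on {0<..<eps} f'' \<and>
        f 0 = eta0 \<and> f' 0 = 0 \<and>
        (\<forall>r\<in>{0<..<eps}.
           deriv (deriv (\<lambda>s. f s powr m / m)) r
           + (real n - 1) / r * deriv (\<lambda>s. f s powr m / m) r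
           + alpha * f r + beta * r * f' r = 0))"

end

theory Submission
  imports Defs
begin

definition Aop :: "nat \<Rightarrow> (real \<Rightarrow> real) \<Rightarrow> real \<Rightarrow> real" where
  "Aop n u t = integral {0..t} (\<lambda>s. s^(n-1) * u s)"

definition Gop :: "nat \<Rightarrow> real \<Rightarrow> real \<Rightarrow> (real \<Rightarrow> real) \<Rightarrow> real \<Rightarrow> real" where
  "Gop n beta gam u t = - beta * t * u t - gam * (Aop n u t / t^(n-1))"

definition Phi :: "nat \<Rightarrow> real \<Rightarrow> real \<Rightarrow> real \<Rightarrow> (real \<Rightarrow> real) \<Rightarrow> real \<Rightarrow> real" where
  "Phi n m beta gam u t = u t powr (1-m) * Gop n beta gam u t"

lemma powr_lip:
  fixes a b c m :: real
  assumes "0 < m" "m < 1" "c > 0" "a \<ge> c" "b \<ge> c"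
  shows "\<bar>a powr (1-m) - b powr (1-m)\<bar> \<le> c powr (-m) * \<bar>a - b\<bar>"
proof -
  have key: "\<bar>hi powr (1-m) - lo powr (1-m)\<bar> \<le> c powr (-m) * \<bar>hi - lo\<bar>"
    if "c \<le> lo" "lo < hi" for lo hi
  proof -
    have "\<And>x. lo \<le> x \<Longrightarrow> x \<le> hi \<Longrightarrow> ((\<lambda>x. x powr (1-m)) has_real_derivative (1-m) * x powr (1-m-1)) (at x)"
      using that assms by (intro has_real_derivative_powr) auto
    from MVT2[OF that(2) this] obtain z where z: "lo < z" "z < hi"
      "hi powr (1-m) - lo powr (1-m) = (hi - lo) * ((1-m) * z powr (1-m-1))" by blast
    have "z powr (-m) \<le> c powr (-m)"
      using z that assms by (intro powr_mono2') auto
    moreover have "0 \<le> z powr (-m)" by simp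
    ultimately have "(1-m) * z powr (-m) \<le> c powr (-m)"
      using assms by (smt (verit) mult_left_le_one_le)
    moreover have "0 \<le> (1-m) * z powr (-m)" using assms by simp
    ultimately show ?thesis using z that
      by (simp add: abs_mult)
  qed
  show ?thesis
  proof (cases a b rule: linorder_cases)
    case less then show ?thesis using key[of a b] assms by (simp add: abs_minus_commute)
  next
    case greater then show ?thesis using key[of b a] assms by simp
  qed simp
qed

lemma A_bound:
  fixes u :: "real \<Rightarrow> real"
  assumes n: "n \<ge> 2" and t: "0 \<le> t" and cu: "continuous_on {0..t} u"
    and ub: "\<And>s. s \<in> {0..t} \<Longrightarrow> \<bar>u s\<bar> \<le> B"
  shows "\<bar>Aop n u t / t^(n-1)\<bar> \<le> B * t"
proof (cases "t = 0")
  case True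
  have e: "n - Suc 0 = Suc (n-2)" using n by simp
  show ?thesis using True by (simp add: e)
next
  case False
  then have tp: "t > 0" using t by simp
  have B0: "B \<ge> 0" using ub[of 0] t by auto
  have "norm (Aop n u t) \<le> (t^(n-1) * B) * (t - 0)"
    unfolding Aop_def
  proof (rule integral_bound[OF t])
    show "continuous_on {0..t} (\<lambda>s. s ^ (n - 1) * u s)"
      by (intro continuous_intros cu)
    fix s assume s: "s \<in> {0..t}"
    have "\<bar>s^(n-1)\<bar> \<le> t^(n-1)" using s by (auto intro: power_mono)
    then show "norm (s ^ (n - 1) * u s) \<le> t ^ (n - 1) * B"
      using ub[OF s] by (simp add: abs_mult mult_mono B0)
  qed
  then show ?thesis using tp
    by (simp add: abs_div pos_divide_le_eq mult_ac)
qed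

lemma A_diff:
  fixes u v :: "real \<Rightarrow> real"
  assumes n: "n \<ge> 2" and t: "0 \<le> t" and cu: "continuous_on {0..t} u" and cv: "continuous_on {0..t} v"
    and ub: "\<And>s. s \<in> {0..t} \<Longrightarrow> \<bar>u s - v s\<bar> \<le> D"
  shows "\<bar>Aop n u t / t^(n-1) - Aop n v t / t^(n-1)\<bar> \<le> D * t"
proof -
  have "Aop n u t - Aop n v t = Aop n (\<lambda>s. u s - v s) t"
    unfolding Aop_def
    by (subst integral_diff[symmetric])
       (auto intro!: integrable_continuous_interval continuous_intros cu cv simp: algebra_simps)
  moreover have "\<bar>Aop n (\<lambda>s. u s - v s) t / t^(n-1)\<bar> \<le> D * t"
    by (rule A_bound[OF n t]) (auto intro!: continuous_intros cu cv ub)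
  ultimately show ?thesis by (simp add: diff_divide_distrib[symmetric])
qed

lemma G_bound:
  fixes u :: "real \<Rightarrow> real"
  assumes n: "n \<ge> 2" and t: "0 \<le> t" and cu: "continuous_on {0..t} u"
    and ub: "\<And>s. s \<in> {0..t} \<Longrightarrow> \<bar>u s\<bar> \<le> B"
  shows "\<bar>Gop n beta gam u t\<bar> \<le> (\<bar>beta\<bar> + \<bar>gam\<bar>) * B * t"
proof -
  have a: "\<bar>Aop n u t / t^(n-1)\<bar> \<le> B * t" by (rule A_bound[OF n t cu ub])
  have b: "\<bar>u t\<bar> \<le> B" using ub t by auto
  have "\<bar>Gop n beta gam u t\<bar> = \<bar>(- beta * t * u t) - gam * (Aop n u t / t^(n-1))\<bar>"
    unfolding Gop_def ..
  also have "\<dots> \<le> \<bar>- beta * t * u t\<bar> + \<bar>gam * (Aop n u t / t^(n-1))\<bar>"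
    by (rule abs_triangle_ineq4)
  also have "\<dots> = \<bar>beta\<bar> * t * \<bar>u t\<bar> + \<bar>gam\<bar> * \<bar>Aop n u t / t^(n-1)\<bar>"
    using t by (simp add: abs_mult)
  also have "\<dots> \<le> \<bar>beta\<bar> * t * B + \<bar>gam\<bar> * (B * t)"
    using a b t by (intro add_mono mult_left_mono) auto
  finally show ?thesis by (simp add: algebra_simps)
qed

lemma G_diff:
  fixes u v :: "real \<Rightarrow> real"
  assumes n: "n \<ge> 2" and t: "0 \<le> t" and cu: "continuous_on {0..t} u" and cv: "continuous_on {0..t} v"
    and ub: "\<And>s. s \<in> {0..t} \<Longrightarrow> \<bar>u s - v s\<bar> \<le> D"
  shows "\<bar>Gop n beta gam u t - Gop n beta gam v t\<bar> \<le> (\<bar>beta\<bar> + \<bar>gam\<bar>) * D * t"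
proof -
  have a: "\<bar>Aop n u t / t^(n-1) - Aop n v t / t^(n-1)\<bar> \<le> D * t" by (rule A_diff[OF n t cu cv ub])
  have b: "\<bar>u t - v t\<bar> \<le> D" using ub t by auto
  have "Gop n beta gam u t - Gop n beta gam v t = - beta * t * (u t - v t) - gam * (Aop n u t / t^(n-1) - Aop n v t / t^(n-1))"
    unfolding Gop_def by (simp add: algebra_simps)
  then have "\<bar>Gop n beta gam u t - Gop n beta gam v t\<bar> = \<bar>(- beta * t * (u t - v t)) - gam * (Aop n u t / t^(n-1) - Aop n v t / t^(n-1))\<bar>"
    by simp
  also have "\<dots> \<le> \<bar>- beta * t * (u t - v t)\<bar> + \<bar>gam * (Aop n u t / t^(n-1) - Aop n v t / t^(n-1))\<bar>"
    by (rule abs_triangle_ineq4)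
  also have "\<dots> = \<bar>beta\<bar> * t * \<bar>u t - v t\<bar> + \<bar>gam\<bar> * \<bar>Aop n u t / t^(n-1) - Aop n v t / t^(n-1)\<bar>"
    using t by (simp add: abs_mult)
  also have "\<dots> \<le> \<bar>beta\<bar> * t * D + \<bar>gam\<bar> * (D * t)"
    using a b t by (intro add_mono mult_left_mono) auto
  finally show ?thesis by (simp add: algebra_simps)
qed

lemma Phi_bound:
  fixes u :: "real \<Rightarrow> real"
  assumes n: "n \<ge> 2" and t: "0 \<le> t" and cu: "continuous_on {0..t} u" and m: "m < 1"
    and eta: "eta > 0"
    and ub: "\<And>s. s \<in> {0..t} \<Longrightarrow> eta/2 \<le> u s \<and> u s \<le> 2*eta"
  shows "\<bar>Phi n m beta gam u t\<bar> \<le> (2*eta) powr (1-m) * ((\<bar>beta\<bar> + \<bar>gam\<bar>) * (2*eta) * t)"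
proof -
  have g: "\<bar>Gop n beta gam u t\<bar> \<le> (\<bar>beta\<bar> + \<bar>gam\<bar>) * (2*eta) * t"
    by (rule G_bound[OF n t cu]) (use ub eta in fastforce)
  have ut: "eta/2 \<le> u t" "u t \<le> 2*eta" using ub[of t] t by auto
  have p: "u t powr (1-m) \<le> (2*eta) powr (1-m)"
    using ut m eta by (intro powr_mono2) auto
  have "\<bar>Phi n m beta gam u t\<bar> = u t powr (1-m) * \<bar>Gop n beta gam u t\<bar>"
    unfolding Phi_def by (simp add: abs_mult)
  also have "\<dots> \<le> (2*eta) powr (1-m) * ((\<bar>beta\<bar> + \<bar>gam\<bar>) * (2*eta) * t)"
    using p g by (intro mult_mono) auto
  finally show ?thesis .
qed

lemma Phi_diff:
  fixes u v :: "real \<Rightarrow> real"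
  assumes n: "n \<ge> 2" and t: "0 \<le> t" and cu: "continuous_on {0..t} u" and cv: "continuous_on {0..t} v"
    and m: "0 < m" "m < 1"
    and eta: "eta > 0"
    and ub: "\<And>s. s \<in> {0..t} \<Longrightarrow> eta/2 \<le> u s \<and> u s \<le> 2*eta"
    and vb: "\<And>s. s \<in> {0..t} \<Longrightarrow> eta/2 \<le> v s \<and> v s \<le> 2*eta"
    and D: "\<And>s. s \<in> {0..t} \<Longrightarrow> \<bar>u s - v s\<bar> \<le> D"
  shows "\<bar>Phi n m beta gam u t - Phi n m beta gam v t\<bar> \<le>
    (eta/2) powr (-m) * ((\<bar>beta\<bar> + \<bar>gam\<bar>) * (2*eta) * t) * D + (2*eta) powr (1-m) * ((\<bar>beta\<bar> + \<bar>gam\<bar>) * D * t)"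
proof -
  let ?c = "\<bar>beta\<bar> + \<bar>gam\<bar>"
  have g: "\<bar>Gop n beta gam u t\<bar> \<le> ?c * (2*eta) * t"
    by (rule G_bound[OF n t cu]) (use ub eta in fastforce)
  have gd: "\<bar>Gop n beta gam u t - Gop n beta gam v t\<bar> \<le> ?c * D * t"
    by (rule G_diff[OF n t cu cv D])
  have ut: "eta/2 \<le> u t" "u t \<le> 2*eta" using ub[of t] t by auto
  have vt: "eta/2 \<le> v t" "v t \<le> 2*eta" using vb[of t] t by auto
  have Dt: "\<bar>u t - v t\<bar> \<le> D" using D[of t] t by auto
  have p: "v t powr (1-m) \<le> (2*eta) powr (1-m)"
    using vt m eta by (intro powr_mono2) auto
  have l: "\<bar>u t powr (1-m) - v t powr (1-m)\<bar> \<le> (eta/2) powr (-m) * \<bar>u t - v t\<bar>"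
    by (rule powr_lip) (use m eta ut vt in auto)
  have "Phi n m beta gam u t - Phi n m beta gam v t =
     (u t powr (1-m) - v t powr (1-m)) * Gop n beta gam u t + v t powr (1-m) * (Gop n beta gam u t - Gop n beta gam v t)"
    unfolding Phi_def by (simp add: algebra_simps)
  then have "\<bar>Phi n m beta gam u t - Phi n m beta gam v t\<bar> \<le>
     \<bar>u t powr (1-m) - v t powr (1-m)\<bar> * \<bar>Gop n beta gam u t\<bar> + v t powr (1-m) * \<bar>Gop n beta gam u t - Gop n beta gam v t\<bar>"
    by (metis (no_types, lifting) abs_mult abs_of_nonneg abs_triangle_ineq powr_ge_zero)
  also have "\<dots> \<le> ((eta/2) powr (-m) * D) * (?c * (2*eta) * t) + (2*eta) powr (1-m) * (?c * D * t)"
  proof (intro add_mono mult_mono)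
    show "\<bar>u t powr (1 - m) - v t powr (1 - m)\<bar> \<le> (eta / 2) powr - m * D"
      using l Dt by (meson mult_left_mono order_trans powr_ge_zero)
  qed (use g gd p Dt in auto)
  finally show ?thesis by (simp add: algebra_simps)
qed

lemma powr_inv_pair: "(x::real) > 0 \<Longrightarrow> x powr (1-m) * x powr (m-1) = 1"
  by (simp add: powr_add[symmetric])

lemma aux_solve:
  fixes R X b r y g A :: real
  assumes "R > 0" "R * X + b * (r * R) * y = - g * A"
  shows "X = - b * r * y - g * (A / R)"
proof -
  have "X = (R * X) / R" using assms(1) by simp
  also have "R * X = - g * A - b * (r * R) * y" using assms(2) by linarith
  finally show ?thesis using assms(1) by (simp add: field_simps)
qed

lemma sol_props:
  assumes n: "n \<ge> 3" and m: "0 < m" "m < 1"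
    and sol: "radial_sol n m alpha beta eta eps f"
  shows "continuous_on {0..<eps} f" "f 0 = eta" "\<forall>r\<in>{0..<eps}. f r > 0"
    "\<forall>r\<in>{0..<eps}. (f has_real_derivative Phi n m beta (alpha - real n * beta) f r) (at r within {0..<eps})"
proof -
  obtain f' f'' where pos: "\<forall>r\<in>{0..<eps}. f r > 0"
    and d1: "\<forall>r\<in>{0..<eps}. (f has_real_derivative f' r) (at r within {0..<eps})"
    and c1: "continuous_on {0..<eps} f'"
    and d2: "\<forall>r\<in>{0<..<eps}. (f' has_real_derivative f'' r) (at r)"
    and f0: "f 0 = eta" and f'0: "f' 0 = 0"
    and ode: "\<forall>r\<in>{0<..<eps}.
           deriv (deriv (\<lambda>s. f s powr m / m)) r
           + (real n - 1) / r * deriv (\<lambda>s. f s powr m / m) r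
           + alpha * f r + beta * r * f' r = 0"
    using sol unfolding radial_sol_def by blast
  show cf: "continuous_on {0..<eps} f"
    using d1 by (intro DERIV_continuous_on) auto
  show "f 0 = eta" by (rule f0)
  show "\<forall>r\<in>{0..<eps}. f r > 0" by (rule pos)
  have dat: "(f has_real_derivative f' s) (at s)" if "s \<in> {0<..<eps}" for s
  proof -
    have "s \<in> interior {0..<eps}" using that by (simp add: interior_atLeastLessThan)
    then have "at s within {0..<eps} = at s" by (rule at_within_interior)
    moreover have "(f has_real_derivative f' s) (at s within {0..<eps})" using d1 that by auto
    ultimately show ?thesis by simp
  qed
  define g1 where "g1 s = f s powr (m-1) * f' s" for s
  define g2 where "g2 s = (m-1) * f s powr (m-1-1) * f' s * f' s + f s powr (m-1) * f'' s" for s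
  have dg: "((\<lambda>s. f s powr m / m) has_real_derivative g1 s) (at s)" if "s \<in> {0<..<eps}" for s
  proof -
    have fs: "f s > 0" using pos that by auto
    have "((\<lambda>s. f s powr m) has_real_derivative m * f s powr (m - of_nat 1) * f' s) (at s)"
      by (rule DERIV_fun_powr[OF dat[OF that] fs])
    then have "((\<lambda>s. f s powr m / m) has_real_derivative m * f s powr (m - of_nat 1) * f' s / m) (at s)"
      by (rule DERIV_cdivide)
    then show ?thesis using m unfolding g1_def by simp
  qed
  have deriv1: "deriv (\<lambda>s. f s powr m / m) s = g1 s" if "s \<in> {0<..<eps}" for s
    using dg[OF that] by (rule DERIV_imp_deriv)
  have dg1: "(g1 has_real_derivative g2 s) (at s)" if "s \<in> {0<..<eps}" for s
  proof -
    have fs: "f s > 0" using pos that by auto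
    have "((\<lambda>s. f s powr (m-1)) has_real_derivative (m-1) * f s powr ((m-1) - of_nat 1) * f' s) (at s)"
      by (rule DERIV_fun_powr[OF dat[OF that] fs])
    from DERIV_mult[OF this d2[rule_format, OF that]]
    show ?thesis unfolding g1_def g2_def by (simp add: algebra_simps)
  qed
  have deriv2: "deriv (deriv (\<lambda>s. f s powr m / m)) s = g2 s" if "s \<in> {0<..<eps}" for s
  proof -
    have "(deriv (\<lambda>s. f s powr m / m) has_real_derivative g2 s) (at s)"
      by (rule has_field_derivative_transform_within_open[OF dg1[OF that], of "{0<..<eps}"])
         (use that deriv1 in auto)
    then show ?thesis by (rule DERIV_imp_deriv)
  qed
  have ode2: "g2 s + (real n - 1) / s * g1 s + alpha * f s + beta * s * f' s = 0"
    if "s \<in> {0<..<eps}" for s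
    using ode that deriv1 deriv2 by auto
  define k where "k = n - 2"
  have k: "n = Suc (Suc k)" using n unfolding k_def by simp
  define gam where "gam = alpha - real n * beta"
  define H where "H s = s^(n-1) * g1 s + beta * s^n * f s" for s
  define Hd where "Hd s = - gam * (s^(n-1) * f s)" for s
  have dH: "(H has_real_derivative Hd s) (at s)" if "s \<in> {0<..<eps}" for s
  proof -
    have s0: "s > 0" using that by auto
    have e: "g2 s = - ((real n - 1) / s * g1 s + alpha * f s + beta * s * f' s)"
      using ode2[OF that] by linarith
    show ?thesis
      unfolding H_def
      apply (rule derivative_eq_intros dg1[OF that] dat[OF that] refl)+
      unfolding Hd_def gam_def e using s0 k
      by (simp add: field_simps)
  qed
  have key: "f' r = Phi n m beta gam f r" if r: "r \<in> {0<..<eps}" for r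
  proof -
    have r0: "r > 0" using r by auto
    have sub: "{0..r} \<subseteq> {0..<eps}" using r by auto
    have cf': "continuous_on {0..r} f'" using continuous_on_subset[OF c1 sub] .
    have cfr: "continuous_on {0..r} f" using continuous_on_subset[OF cf sub] .
    have cpow: "continuous_on {0..r} (\<lambda>s. f s powr (m-1))"
      by (rule continuous_on_powr[OF cfr continuous_on_const]) (use pos sub in fastforce)
    have cH: "continuous_on {0..r} H"
      unfolding H_def g1_def by (intro continuous_intros cfr cf' cpow)
    have "(Hd has_integral (H r - H 0)) {0..r}"
      by (rule fundamental_theorem_of_calculus_interior[OF _ cH])
         (use r0 r dH in \<open>auto simp: has_real_derivative_iff_has_vector_derivative[symmetric]\<close>)
    moreover have "H 0 = 0" unfolding H_def using k by simp
    ultimately have "integral {0..r} Hd = H r" by (simp add: integral_unique)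
    moreover have "integral {0..r} Hd = - gam * Aop n f r"
      unfolding Hd_def Aop_def by (rule integral_mult_right)
    ultimately have eq: "r^(n-1) * (f r powr (m-1) * f' r) + beta * r^n * f r = - gam * Aop n f r"
      unfolding H_def g1_def by simp
    have fr: "f r > 0" using pos r by auto
    have pq: "f r powr (1-m) * f r powr (m-1) = 1" by (rule powr_inv_pair[OF fr])
    have rn: "r^n = r * r^(n-1)" using k by simp
    have rpos: "r^(n-1) > 0" using r0 by simp
    have "f r powr (m-1) * f' r = (- beta * r * f r - gam * (Aop n f r / r^(n-1)))"
      by (rule aux_solve[OF rpos]) (use eq rn in simp)
    then have "f r powr (1-m) * (f r powr (m-1) * f' r) = f r powr (1-m) * (- beta * r * f r - gam * (Aop n f r / r^(n-1)))"
      by simp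
    then show ?thesis unfolding Phi_def Gop_def using pq by (simp add: mult.assoc[symmetric])
  qed
  have key0: "f' 0 = Phi n m beta gam f 0"
    unfolding Phi_def Gop_def f'0 using k by simp
  show "\<forall>r\<in>{0..<eps}. (f has_real_derivative Phi n m beta (alpha - real n * beta) f r) (at r within {0..<eps})"
  proof
    fix r assume r: "r \<in> {0..<eps}"
    have "f' r = Phi n m beta gam f r"
      using key key0 r by (cases "r = 0") auto
    then show "(f has_real_derivative Phi n m beta (alpha - real n * beta) f r) (at r within {0..<eps})"
      using d1 r unfolding gam_def by metis
  qed
qed

definition Mc :: "real \<Rightarrow> real \<Rightarrow> real \<Rightarrow> real \<Rightarrow> real" where
  "Mc m beta gam eta = (2*eta) powr (1-m) * ((\<bar>beta\<bar> + \<bar>gam\<bar>) * (2*eta))"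

definition Kc :: "real \<Rightarrow> real \<Rightarrow> real \<Rightarrow> real \<Rightarrow> real" where
  "Kc m beta gam eta = (eta/2) powr (-m) * ((\<bar>beta\<bar> + \<bar>gam\<bar>) * (2*eta)) + (2*eta) powr (1-m) * (\<bar>beta\<bar> + \<bar>gam\<bar>)"

lemma Mc_nonneg: "eta > 0 \<Longrightarrow> Mc m beta gam eta \<ge> 0"
  unfolding Mc_def by simp

lemma Kc_nonneg: "eta > 0 \<Longrightarrow> Kc m beta gam eta \<ge> 0"
  unfolding Kc_def by simp

lemma Phi_bound':
  fixes u :: "real \<Rightarrow> real"
  assumes n: "n \<ge> 2" and t: "0 \<le> t" and cu: "continuous_on {0..t} u" and m: "m < 1"
    and eta: "eta > 0"
    and ub: "\<And>s. s \<in> {0..t} \<Longrightarrow> eta/2 \<le> u s \<and> u s \<le> 2*eta"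
  shows "\<bar>Phi n m beta gam u t\<bar> \<le> Mc m beta gam eta * t"
  using Phi_bound[OF n t cu m eta ub, of beta gam] unfolding Mc_def by (simp add: mult_ac)

lemma Phi_diff':
  fixes u v :: "real \<Rightarrow> real"
  assumes n: "n \<ge> 2" and t: "0 \<le> t" and cu: "continuous_on {0..t} u" and cv: "continuous_on {0..t} v"
    and m: "0 < m" "m < 1"
    and eta: "eta > 0"
    and ub: "\<And>s. s \<in> {0..t} \<Longrightarrow> eta/2 \<le> u s \<and> u s \<le> 2*eta"
    and vb: "\<And>s. s \<in> {0..t} \<Longrightarrow> eta/2 \<le> v s \<and> v s \<le> 2*eta"
    and D: "\<And>s. s \<in> {0..t} \<Longrightarrow> \<bar>u s - v s\<bar> \<le> D"
  shows "\<bar>Phi n m beta gam u t - Phi n m beta gam v t\<bar> \<le> Kc m beta gam eta * t * D"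
  using Phi_diff[OF n t cu cv m eta ub vb D, of beta gam] unfolding Kc_def by (simp add: algebra_simps)

lemma within_to_at:
  assumes "\<forall>r\<in>{0..<eps}. (f has_real_derivative D r) (at r within {0..<eps})" "r \<in> {0<..<eps}"
  shows "(f has_real_derivative D r) (at r)"
proof -
  have "r \<in> interior {0..<eps}" using assms(2) by (simp add: interior_atLeastLessThan)
  then have "at r within {0..<eps} = at r" by (rule at_within_interior)
  moreover have "(f has_real_derivative D r) (at r within {0..<eps})" using assms by auto
  ultimately show ?thesis by simp
qed

lemma apriori:
  assumes n: "n \<ge> 3" and m: "0 < m" "m < 1" and eta: "eta > 0"
    and sol: "radial_sol n m alpha beta eta eps f"
    and e1: "eps \<le> 1" and eM: "eps * Mc m beta (alpha - real n * beta) eta \<le> eta/4"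
  shows "\<forall>r\<in>{0..<eps}. \<bar>f r - eta\<bar> < eta/2"
proof (rule ccontr)
  let ?M = "Mc m beta (alpha - real n * beta) eta"
  let ?P = "Phi n m beta (alpha - real n * beta) f"
  note P = sol_props[OF n m sol]
  assume "\<not> ?thesis"
  then obtain r0 where r0: "r0 \<in> {0..<eps}" "\<not> \<bar>f r0 - eta\<bar> < eta/2" by blast
  define Bad where "Bad = {0..r0} \<inter> (\<lambda>s. \<bar>f s - eta\<bar>) -` {eta/2..}"
  have cf0: "continuous_on {0..r0} f" by (rule continuous_on_subset[OF P(1)]) (use r0 in auto)
  have "closed Bad" unfolding Bad_def
    by (rule continuous_closed_preimage) (auto intro!: continuous_intros cf0)
  moreover have "Bad \<noteq> {}" using r0 unfolding Bad_def by auto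
  moreover have "bdd_below Bad" unfolding Bad_def by (rule bdd_belowI[of _ 0]) auto
  ultimately have tB: "Inf Bad \<in> Bad" using closed_contains_Inf by blast
  define t where "t = Inf Bad"
  have tB': "t \<in> Bad" using tB t_def by simp
  have t0: "0 \<le> t" "t \<le> r0" and ft: "\<bar>f t - eta\<bar> \<ge> eta/2" using tB' unfolding Bad_def by auto
  have good: "\<bar>f s - eta\<bar> < eta/2" if "0 \<le> s" "s < t" for s
  proof (rule ccontr)
    assume "\<not> ?thesis"
    then have "s \<in> Bad" using that t0 unfolding Bad_def by auto
    then have "t \<le> s" unfolding t_def by (intro cInf_lower) (auto intro: bdd_belowI[of _ 0] simp: Bad_def)
    then show False using that by simp
  qed
  have tpos: "t > 0" using ft P(2) eta t0 by (cases "t = 0") auto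
  have cft: "continuous_on {0..t} f" by (rule continuous_on_subset[OF P(1)]) (use t0 r0 in auto)
  have dift: "f differentiable at x" if "0 < x" "x < t" for x
    using within_to_at[OF P(4), of x] that t0 r0 real_differentiable_def by fastforce
  obtain l z where z: "0 < z" "z < t" "(f has_real_derivative l) (at z)" "f t - f 0 = (t - 0) * l"
    using MVT[OF tpos cft dift] by blast
  have "(f has_real_derivative ?P z) (at z)"
    using within_to_at[OF P(4), of z] z t0 r0 by auto
  then have lz: "l = ?P z" using z(3) DERIV_unique by blast
  have "\<bar>?P z\<bar> \<le> ?M * z"
  proof (rule Phi_bound')
    show "continuous_on {0..z} f" using continuous_on_subset[OF cft] z by auto
    fix s assume "s \<in> {0..z}"
    then have h: "\<bar>f s - eta\<bar> < eta/2" using good z by auto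
    show "eta / 2 \<le> f s \<and> f s \<le> 2 * eta" using abs_less_iff[THEN iffD1, OF h] eta by linarith
  qed (use n m eta z in auto)
  also have "\<dots> \<le> ?M * 1" using z t0 r0 e1 Mc_nonneg[OF eta] by (intro mult_left_mono) auto
  finally have lb: "\<bar>l\<bar> \<le> ?M" using lz by simp
  have "\<bar>f t - eta\<bar> = t * \<bar>l\<bar>" using z(4) P(2) t0 by (simp add: abs_mult)
  also have "\<dots> \<le> eps * ?M" using lb t0 r0 by (intro mult_mono) auto
  finally show False using eM ft eta by linarith
qed

lemma uniq:
  assumes n: "n \<ge> 3" and m: "0 < m" "m < 1" and eta: "eta > 0"
    and solf: "radial_sol n m alpha beta eta eps f"
    and solg: "radial_sol n m alpha beta eta eps g"
    and e1: "eps \<le> 1" and eM: "eps * Mc m beta (alpha - real n * beta) eta \<le> eta/4"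
    and eK: "eps * Kc m beta (alpha - real n * beta) eta \<le> 1/2"
  shows "\<forall>r\<in>{0..<eps}. f r = g r"
proof
  let ?K = "Kc m beta (alpha - real n * beta) eta"
  let ?P = "Phi n m beta (alpha - real n * beta)"
  note Pf = sol_props[OF n m solf] and Pg = sol_props[OF n m solg]
  have rf: "eta/2 \<le> f s \<and> f s \<le> 2*eta" if "s \<in> {0..<eps}" for s
  proof -
    have h: "\<bar>f s - eta\<bar> < eta/2" using apriori[OF n m eta solf e1 eM] that by blast
    show ?thesis using abs_less_iff[THEN iffD1, OF h] eta by linarith
  qed
  have rg: "eta/2 \<le> g s \<and> g s \<le> 2*eta" if "s \<in> {0..<eps}" for s
  proof -
    have h: "\<bar>g s - eta\<bar> < eta/2" using apriori[OF n m eta solg e1 eM] that by blast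
    show ?thesis using abs_less_iff[THEN iffD1, OF h] eta by linarith
  qed
  fix T assume T: "T \<in> {0..<eps}"
  have sub: "{0..T} \<subseteq> {0..<eps}" using T by auto
  have cf: "continuous_on {0..T} f" using continuous_on_subset[OF Pf(1) sub] .
  have cg: "continuous_on {0..T} g" using continuous_on_subset[OF Pg(1) sub] .
  obtain x0 where x0: "x0 \<in> {0..T}" "\<forall>y\<in>{0..T}. \<bar>f y - g y\<bar> \<le> \<bar>f x0 - g x0\<bar>"
  proof -
    have "continuous_on {0..T} (\<lambda>s. \<bar>f s - g s\<bar>)" by (intro continuous_intros cf cg)
    from continuous_attains_sup[OF compact_Icc _ this] T that show ?thesis by auto
  qed
  define D where "D = \<bar>f x0 - g x0\<bar>"
  have D0: "D \<ge> 0" unfolding D_def by simp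
  have half: "\<bar>f r - g r\<bar> \<le> D/2" if r: "r \<in> {0..T}" for r
  proof (cases "r = 0")
    case True then show ?thesis using Pf(2) Pg(2) D0 by simp
  next
    case False
    then have rpos: "r > 0" using r by auto
    have cr: "continuous_on {0..r} (\<lambda>s. f s - g s)"
      using continuous_on_subset[OF cf] continuous_on_subset[OF cg] r
      by (auto intro!: continuous_intros)
    have dd: "((\<lambda>s. f s - g s) has_real_derivative ?P f x - ?P g x) (at x)" if "0 < x" "x < r" for x
      using within_to_at[OF Pf(4), of x] within_to_at[OF Pg(4), of x] that r T
      by (auto intro!: derivative_intros)
    then have dift: "(\<lambda>s. f s - g s) differentiable at x" if "0 < x" "x < r" for x
      using that real_differentiable_def by blast
    obtain l z where z: "0 < z" "z < r" "((\<lambda>s. f s - g s) has_real_derivative l) (at z)"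
      "(f r - g r) - (f 0 - g 0) = (r - 0) * l"
      using MVT[OF rpos cr dift] by blast
    have lz: "l = ?P f z - ?P g z" using dd[OF z(1,2)] z(3) DERIV_unique by blast
    have "\<bar>?P f z - ?P g z\<bar> \<le> ?K * z * D"
    proof (rule Phi_diff')
      show "continuous_on {0..z} f" using continuous_on_subset[OF cf] z r by auto
      show "continuous_on {0..z} g" using continuous_on_subset[OF cg] z r by auto
      fix s assume s: "s \<in> {0..z}"
      then have "s \<in> {0..<eps}" "s \<in> {0..T}" using z r T by auto
      then show "eta / 2 \<le> f s \<and> f s \<le> 2 * eta" "eta / 2 \<le> g s \<and> g s \<le> 2 * eta"
        "\<bar>f s - g s\<bar> \<le> D" using rf rg x0 unfolding D_def by auto
    qed (use n m eta z in auto)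
    also have "\<dots> \<le> ?K * 1 * D" using z r T e1 Kc_nonneg[OF eta] D0
      by (intro mult_right_mono mult_left_mono) auto
    finally have lb: "\<bar>l\<bar> \<le> ?K * D" using lz by simp
    have "\<bar>f r - g r\<bar> = r * \<bar>l\<bar>" using z(4) Pf(2) Pg(2) rpos by (simp add: abs_mult)
    also have "\<dots> \<le> eps * (?K * D)" using lb r T by (intro mult_mono) auto
    also have "\<dots> = (eps * ?K) * D" by simp
    also have "\<dots> \<le> (1/2) * D" using eK D0 by (intro mult_right_mono) auto
    finally show ?thesis by simp
  qed
  have "D \<le> D/2" using half[OF x0(1)] unfolding D_def by simp
  then have "D = 0" using D0 by simp
  then have "\<bar>f T - g T\<bar> \<le> 0" using x0 T unfolding D_def by auto
  then show "f T = g T" by simp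
qed

lemma Aop_deriv:
  assumes cu: "continuous_on {0..e} u" and t: "t \<in> {0..e}"
  shows "(Aop n u has_real_derivative t^(n-1) * u t) (at t within {0..e})"
proof -
  have "((\<lambda>x. integral {0..x} (\<lambda>s. s^(n-1) * u s)) has_real_derivative t^(n-1) * u t) (at t within {0..e})"
    by (rule integral_has_real_derivative[OF _ t]) (intro continuous_intros cu)
  moreover have "Aop n u = (\<lambda>x. integral {0..x} (\<lambda>s. s^(n-1) * u s))"
    by (rule ext) (simp add: Aop_def)
  ultimately show ?thesis by simp
qed

lemma Aop_cont:
  assumes cu: "continuous_on {0..e} u"
  shows "continuous_on {0..e} (Aop n u)"
  by (rule DERIV_continuous_on[OF Aop_deriv[OF cu]])

lemma B_cont:
  fixes u :: "real \<Rightarrow> real"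
  assumes n: "n \<ge> 2" and cu: "continuous_on {0..e} u"
    and ub: "\<And>s. s \<in> {0..e} \<Longrightarrow> \<bar>u s\<bar> \<le> B"
  shows "continuous_on {0..e} (\<lambda>t. Aop n u t / t^(n-1))"
  unfolding continuous_on_eq_continuous_within
proof
  fix t assume t: "t \<in> {0..e}"
  have cA: "continuous (at t within {0..e}) (Aop n u)"
    using Aop_cont[OF cu] t continuous_on_eq_continuous_within by blast
  show "continuous (at t within {0..e}) (\<lambda>t. Aop n u t / t ^ (n - 1))"
  proof (cases "t = 0")
    case False
    then have "t^(n-1) \<noteq> 0" by simp
    then show ?thesis using cA unfolding continuous_within
      by (intro tendsto_divide) (auto intro!: tendsto_intros)
  next
    case True
    have e0: "n - Suc 0 = Suc (n-2)" using n by simp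
    have "((\<lambda>t. Aop n u t / t ^ (n - 1)) \<longlongrightarrow> 0) (at 0 within {0..e})"
    proof (rule Lim_null_comparison)
      show "\<forall>\<^sub>F x in at 0 within {0..e}. norm (Aop n u x / x ^ (n - 1)) \<le> B * x"
        unfolding eventually_at_filter
      proof (rule always_eventually, intro allI impI)
        fix x :: real assume x: "x \<in> {0..e}"
        show "norm (Aop n u x / x ^ (n - 1)) \<le> B * x"
          using A_bound[OF n _ continuous_on_subset[OF cu] ub, of x] x by auto
      qed
      show "((\<lambda>x. B * x) \<longlongrightarrow> 0) (at 0 within {0..e})"
        by (rule tendsto_eq_intros) (auto intro!: tendsto_intros)
    qed
    then show ?thesis unfolding continuous_within True using e0 by simp
  qed
qed

lemma Gop_cont:
  fixes u :: "real \<Rightarrow> real"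
  assumes n: "n \<ge> 2" and cu: "continuous_on {0..e} u"
    and ub: "\<And>s. s \<in> {0..e} \<Longrightarrow> \<bar>u s\<bar> \<le> B"
  shows "continuous_on {0..e} (Gop n beta gam u)"
proof -
  have "continuous_on {0..e} (\<lambda>t. - beta * t * u t - gam * (Aop n u t / t^(n-1)))"
    by (intro continuous_intros cu B_cont[OF n cu ub])
  moreover have "Gop n beta gam u = (\<lambda>t. - beta * t * u t - gam * (Aop n u t / t^(n-1)))"
    by (rule ext) (simp add: Gop_def)
  ultimately show ?thesis by simp
qed

lemma Phi_cont:
  fixes u :: "real \<Rightarrow> real"
  assumes n: "n \<ge> 2" and cu: "continuous_on {0..e} u"
    and ub: "\<And>s. s \<in> {0..e} \<Longrightarrow> eta/2 \<le> u s \<and> u s \<le> 2*eta" and eta: "eta > 0"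
  shows "continuous_on {0..e} (Phi n m beta gam u)"
proof -
  have ub': "\<bar>u s\<bar> \<le> 2*eta" if "s \<in> {0..e}" for s using ub[OF that] eta by auto
  have "continuous_on {0..e} (\<lambda>t. u t powr (1-m) * Gop n beta gam u t)"
  proof (intro continuous_on_mult Gop_cont[OF n cu ub'] continuous_on_powr cu continuous_on_const ballI)
    fix x assume "x \<in> {0..e}" then show "u x \<noteq> 0" using ub[of x] eta by auto
  qed
  moreover have "Phi n m beta gam u = (\<lambda>t. u t powr (1-m) * Gop n beta gam u t)"
    by (rule ext) (simp add: Phi_def)
  ultimately show ?thesis by simp
qed

lemma F_props:
  fixes u :: "real \<Rightarrow> real"
  assumes n: "n \<ge> 2" and m: "0 < m" "m < 1" and eta: "eta > 0"
    and e: "0 < e" "e \<le> 1" "e * Mc m beta gam eta \<le> eta/4"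
    and cu: "continuous_on UNIV u" and ub: "\<And>s. eta/2 \<le> u s \<and> u s \<le> 2*eta"
  shows "continuous_on UNIV (\<lambda>x. eta + integral {0..max 0 (min e x)} (Phi n m beta gam u))"
    "\<And>x. \<bar>integral {0..max 0 (min e x)} (Phi n m beta gam u)\<bar> \<le> eta/4"
proof -
  let ?P = "Phi n m beta gam u"
  have cP: "continuous_on {0..e} ?P"
    by (rule Phi_cont[OF n continuous_on_subset[OF cu] ub eta]) auto
  have cI: "continuous_on {0..e} (\<lambda>y. integral {0..y} ?P)"
    using integral_has_real_derivative[OF cP] by (intro DERIV_continuous_on) blast
  have "continuous_on UNIV (\<lambda>x. integral {0..max 0 (min e x)} ?P)"
    by (rule continuous_on_compose2[OF cI]) (use e in \<open>auto intro!: continuous_intros\<close>)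
  then show "continuous_on UNIV (\<lambda>x. eta + integral {0..max 0 (min e x)} ?P)"
    by (intro continuous_intros)
  fix x
  let ?c = "max 0 (min e x)"
  have c: "0 \<le> ?c" "?c \<le> e" using e by auto
  have "norm (integral {0..?c} ?P) \<le> Mc m beta gam eta * (?c - 0)"
  proof (rule integral_bound)
    show "continuous_on {0..?c} ?P" using continuous_on_subset[OF cP] c by auto
    fix t assume t: "t \<in> {0..?c}"
    have "\<bar>?P t\<bar> \<le> Mc m beta gam eta * t"
      by (rule Phi_bound'[OF n _ continuous_on_subset[OF cu] m(2) eta ub]) (use t in auto)
    also have "\<dots> \<le> Mc m beta gam eta"
    proof -
      have "t \<le> 1" using t c e by auto
      from mult_left_le[OF this Mc_nonneg[OF eta]] show ?thesis .
    qed
    finally show "norm (?P t) \<le> Mc m beta gam eta" by simp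
  qed (use c in auto)
  also have "\<dots> \<le> Mc m beta gam eta * e" using c Mc_nonneg[OF eta] by (intro mult_left_mono) auto
  finally show "\<bar>integral {0..?c} ?P\<bar> \<le> eta/4" using e by (simp add: mult.commute)
qed

lemma F_diff:
  fixes u v :: "real \<Rightarrow> real"
  assumes n: "n \<ge> 2" and m: "0 < m" "m < 1" and eta: "eta > 0"
    and e: "0 < e" "e \<le> 1" "e * Kc m beta gam eta \<le> 1/2"
    and cu: "continuous_on UNIV u" and ub: "\<And>s. eta/2 \<le> u s \<and> u s \<le> 2*eta"
    and cv: "continuous_on UNIV v" and vb: "\<And>s. eta/2 \<le> v s \<and> v s \<le> 2*eta"
    and D: "\<And>s. \<bar>u s - v s\<bar> \<le> D"
  shows "\<bar>integral {0..max 0 (min e x)} (Phi n m beta gam u) - integral {0..max 0 (min e x)} (Phi n m beta gam v)\<bar> \<le> D/2"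
proof -
  let ?c = "max 0 (min e x)"
  let ?K = "Kc m beta gam eta"
  have c: "0 \<le> ?c" "?c \<le> e" using e by auto
  have D0: "D \<ge> 0" using D[of 0] by linarith
  have cPu: "continuous_on {0..?c} (Phi n m beta gam u)"
    by (rule Phi_cont[OF n continuous_on_subset[OF cu] ub eta]) auto
  have cPv: "continuous_on {0..?c} (Phi n m beta gam v)"
    by (rule Phi_cont[OF n continuous_on_subset[OF cv] vb eta]) auto
  have "integral {0..?c} (Phi n m beta gam u) - integral {0..?c} (Phi n m beta gam v)
      = integral {0..?c} (\<lambda>t. Phi n m beta gam u t - Phi n m beta gam v t)"
    by (rule integral_diff[symmetric]) (auto intro!: integrable_continuous_interval cPu cPv)
  moreover have "norm (integral {0..?c} (\<lambda>t. Phi n m beta gam u t - Phi n m beta gam v t)) \<le> (?K * D) * (?c - 0)"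
  proof (rule integral_bound)
    show "continuous_on {0..?c} (\<lambda>t. Phi n m beta gam u t - Phi n m beta gam v t)"
      by (intro continuous_intros cPu cPv)
    fix t assume t: "t \<in> {0..?c}"
    have "\<bar>Phi n m beta gam u t - Phi n m beta gam v t\<bar> \<le> ?K * t * D"
      by (rule Phi_diff'[OF n _ continuous_on_subset[OF cu] continuous_on_subset[OF cv] m eta ub vb D])
         (use t in auto)
    also have "\<dots> \<le> ?K * 1 * D" using t c e Kc_nonneg[OF eta] D0
      by (intro mult_right_mono mult_left_mono) auto
    finally show "norm (Phi n m beta gam u t - Phi n m beta gam v t) \<le> ?K * D" by simp
  qed (use c in auto)
  moreover have "(?K * D) * (?c - 0) \<le> (?K * D) * e"
    using c Kc_nonneg[OF eta] D0 by (intro mult_left_mono) auto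
  moreover have "(?K * D) * e = (e * ?K) * D" by simp
  moreover have "(e * ?K) * D \<le> (1/2) * D" using e D0 by (intro mult_right_mono) auto
  ultimately show ?thesis by simp
qed

lemma exists_fixed:
  fixes beta gam eta e m :: real
  assumes n: "n \<ge> 2" and m: "0 < m" "m < 1" and eta: "eta > 0"
    and e: "0 < e" "e \<le> 1" "e * Mc m beta gam eta \<le> eta/4" "e * Kc m beta gam eta \<le> 1/2"
  shows "\<exists>f. continuous_on UNIV f \<and> (\<forall>x. eta/2 \<le> f x \<and> f x \<le> 2*eta) \<and>
     (\<forall>x\<in>{0..e}. f x = eta + integral {0..x} (Phi n m beta gam f))"
proof -
  define F where "F u x = eta + integral {0..max 0 (min e x)} (Phi n m beta gam u)" for u :: "real \<Rightarrow> real" and x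
  define S where "S = (PiC UNIV (\<lambda>_. {eta/2..2*eta}) :: (real \<Rightarrow>\<^sub>C real) set)"
  define Top where "Top w = Bcontfun (F (apply_bcontfun w))" for w :: "real \<Rightarrow>\<^sub>C real"
  have inS: "w \<in> S \<longleftrightarrow> (\<forall>x. eta/2 \<le> apply_bcontfun w x \<and> apply_bcontfun w x \<le> 2*eta)" for w
    unfolding S_def mem_PiC_iff by auto
  have Fb: "F (apply_bcontfun w) \<in> bcontfun" and Fr: "\<forall>x. eta/2 \<le> F (apply_bcontfun w) x \<and> F (apply_bcontfun w) x \<le> 2*eta"
    if w: "w \<in> S" for w
  proof -
    have ub: "eta/2 \<le> apply_bcontfun w s \<and> apply_bcontfun w s \<le> 2*eta" for s using w inS by blast
    note FP = F_props[OF n m eta e(1,2,3) continuous_on_apply_bcontfun ub]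
    have b: "\<bar>F (apply_bcontfun w) x - eta\<bar> \<le> eta/4" for x
      unfolding F_def using FP(2)[of x] by simp
    show "F (apply_bcontfun w) \<in> bcontfun"
    proof (rule bcontfun_normI)
      show "continuous_on UNIV (F (apply_bcontfun w))" using FP(1) unfolding F_def by simp
      fix x show "norm (F (apply_bcontfun w) x) \<le> 2*eta"
        unfolding real_norm_def abs_le_iff using abs_le_iff[THEN iffD1, OF b[of x]] eta by linarith
    qed
    show "\<forall>x. eta/2 \<le> F (apply_bcontfun w) x \<and> F (apply_bcontfun w) x \<le> 2*eta"
    proof
      fix x show "eta/2 \<le> F (apply_bcontfun w) x \<and> F (apply_bcontfun w) x \<le> 2*eta"
        using abs_le_iff[THEN iffD1, OF b[of x]] eta by linarith
    qed
  qed
  have TopS: "Top ` S \<subseteq> S"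
  proof
    fix y assume "y \<in> Top ` S"
    then obtain w where w: "w \<in> S" "y = Top w" by blast
    then show "y \<in> S" unfolding inS Top_def using Bcontfun_inverse[OF Fb[OF w(1)]] Fr[OF w(1)] by simp
  qed
  have lip: "dist (Top x) (Top y) \<le> (1/2) * dist x y" if x: "x \<in> S" and y: "y \<in> S" for x y
  proof (rule dist_bound)
    fix s
    have ub: "eta/2 \<le> apply_bcontfun x s \<and> apply_bcontfun x s \<le> 2*eta" for s using x inS by blast
    have vb: "eta/2 \<le> apply_bcontfun y s \<and> apply_bcontfun y s \<le> 2*eta" for s using y inS by blast
    have D: "\<bar>apply_bcontfun x s - apply_bcontfun y s\<bar> \<le> dist x y" for s
      using dist_bounded[of x s y] by (simp add: dist_real_def)
    have "\<bar>F (apply_bcontfun x) s - F (apply_bcontfun y) s\<bar> \<le> dist x y / 2"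
      unfolding F_def using F_diff[OF n m eta e(1,2,4) continuous_on_apply_bcontfun ub continuous_on_apply_bcontfun vb D, of s]
      by simp
    then show "dist (apply_bcontfun (Top x) s) (apply_bcontfun (Top y) s) \<le> 1 / 2 * dist x y"
      unfolding Top_def using Bcontfun_inverse[OF Fb[OF x]] Bcontfun_inverse[OF Fb[OF y]]
      by (simp add: dist_real_def)
  qed
  have cS: "complete S" unfolding S_def complete_eq_closed by (rule closed_PiC) auto
  have neS: "S \<noteq> {}"
  proof -
    have "const_bcontfun eta \<in> S" unfolding inS using eta by (simp add: const_bcontfun.rep_eq)
    then show ?thesis by blast
  qed
  obtain w where w: "w \<in> S" "Top w = w"
    using Banach_fix[OF cS neS _ _ TopS lip] by auto
  define f where "f = apply_bcontfun w"
  have fF: "f x = F f x" for x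
  proof -
    have "f x = apply_bcontfun (Top w) x" using w(2) f_def by simp
    also have "\<dots> = F f x" unfolding Top_def f_def using Bcontfun_inverse[OF Fb[OF w(1)]] by simp
    finally show ?thesis .
  qed
  show ?thesis
  proof (intro exI conjI allI ballI)
    show "continuous_on UNIV f" unfolding f_def by simp
    fix x show "eta/2 \<le> f x" "f x \<le> 2*eta" using w(1) inS f_def by auto
  next
    fix x assume x: "x \<in> {0..e}"
    then have "max 0 (min e x) = x" by auto
    then show "f x = eta + integral {0..x} (Phi n m beta gam f)" using fF[of x] unfolding F_def by simp
  qed
qed


lemma fixed_is_sol:
  fixes f :: "real \<Rightarrow> real"
  assumes n: "n \<ge> 3" and m: "0 < m" "m < 1" and eta: "eta > 0" and e: "e > 0"
    and cf: "continuous_on UNIV f" and fb: "\<And>x. eta/2 \<le> f x \<and> f x \<le> 2*eta"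
    and fi: "\<And>x. x \<in> {0..e} \<Longrightarrow> f x = eta + integral {0..x} (Phi n m beta gam f)"
    and gam: "gam = alpha - real n * beta"
  shows "radial_sol n m alpha beta eta e f"
proof -
  define k where "k = n - 2"
  have k: "n = Suc (Suc k)" using n unfolding k_def by simp
  have n2: "n \<ge> 2" using n by simp
  let ?P = "Phi n m beta gam f"
  let ?G = "Gop n beta gam f"
  have fpos: "f x > 0" for x using fb[of x] eta by auto
  have cfe: "continuous_on {0..e} f" using continuous_on_subset[OF cf] by auto
  have fbe: "eta/2 \<le> f s \<and> f s \<le> 2*eta" if "s \<in> {0..e}" for s using fb by auto
  have fab: "\<bar>f s\<bar> \<le> 2*eta" if "s \<in> {0..e}" for s using fb[of s] eta by auto
  have cP: "continuous_on {0..e} ?P" by (rule Phi_cont[OF n2 cfe fbe eta])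
  have cG: "continuous_on {0..e} ?G" by (rule Gop_cont[OF n2 cfe fab])
  have cA: "continuous_on {0..e} (Aop n f)" by (rule Aop_cont[OF cfe])
  have d1: "(f has_real_derivative ?P r) (at r within {0..<e})" if r: "r \<in> {0..<e}" for r
  proof -
    have "((\<lambda>x. eta + integral {0..x} ?P) has_real_derivative 0 + ?P r) (at r within {0..e})"
      by (intro DERIV_add DERIV_const integral_has_real_derivative cP) (use r in auto)
    then have "((\<lambda>x. eta + integral {0..x} ?P) has_real_derivative ?P r) (at r within {0..<e})"
      by (auto intro: DERIV_subset)
    then show ?thesis
      by (rule has_field_derivative_transform_within[of _ _ _ _ 1]) (use r fi in auto)
  qed
  have d1': "\<forall>r\<in>{0..<e}. (f has_real_derivative ?P r) (at r within {0..<e})" using d1 by blast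
  have dat: "(f has_real_derivative ?P r) (at r)" if "r \<in> {0<..<e}" for r
    by (rule within_to_at[OF d1' that])
  have dA: "(Aop n f has_real_derivative r^(n-1) * f r) (at r)" if r: "r \<in> {0<..<e}" for r
  proof -
    have "(Aop n f has_real_derivative r^(n-1) * f r) (at r within {0..e})"
      by (rule Aop_deriv[OF cfe]) (use r in auto)
    moreover have "at r within {0..e} = at r"
      by (rule at_within_interior) (use r in simp)
    ultimately show ?thesis by simp
  qed
  define Gd where "Gd r = - beta * f r - beta * r * ?P r - gam * (f r - real (n-1) * Aop n f r / r^n)" for r
  have Geq: "?G = (\<lambda>t. - beta * t * f t - gam * (Aop n f t / t^(n-1)))"
    by (rule ext) (simp add: Gop_def)
  have dG: "(?G has_real_derivative Gd r) (at r)" if r: "r \<in> {0<..<e}" for r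
  proof -
    have r0: "r > 0" using r by auto
    have dB: "((\<lambda>t. Aop n f t / t^(n-1)) has_real_derivative
        (r^(n-1) * f r * r^(n-1) - Aop n f r * (real (n-1) * r^(n-1-Suc 0))) / (r^(n-1) * r^(n-1))) (at r)"
      by (rule DERIV_divide[OF dA[OF r] DERIV_pow]) (use r0 in simp)
    have eqB: "(r^(n-1) * f r * r^(n-1) - Aop n f r * (real (n-1) * r^(n-1-Suc 0))) / (r^(n-1) * r^(n-1))
       = f r - real (n-1) * Aop n f r / r^n"
      using r0 unfolding k by (simp add: field_simps)
    have dT: "((\<lambda>t. - beta * t * f t) has_real_derivative (- beta * 1 * f r + - beta * r * ?P r)) (at r)"
      using DERIV_mult[OF DERIV_cmult[OF DERIV_ident, of "- beta"] dat[OF r]] by (simp add: algebra_simps)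
    have "((\<lambda>t. - beta * t * f t - gam * (Aop n f t / t^(n-1))) has_real_derivative
        (- beta * 1 * f r + - beta * r * ?P r) - gam * (f r - real (n-1) * Aop n f r / r^n)) (at r)"
      using DERIV_diff[OF dT DERIV_cmult[OF dB, of gam]] unfolding eqB .
    then show ?thesis unfolding Geq Gd_def by simp
  qed
  define f2 where "f2 r = (1-m) * f r powr (-m) * ?P r * ?G r + f r powr (1-m) * Gd r" for r
  have Peq: "?P = (\<lambda>t. f t powr (1-m) * ?G t)"
    by (rule ext) (simp add: Phi_def)
  have d2: "(?P has_real_derivative f2 r) (at r)" if r: "r \<in> {0<..<e}" for r
  proof -
    have "((\<lambda>t. f t powr (1-m)) has_real_derivative (1-m) * f r powr ((1-m) - of_nat 1) * ?P r) (at r)"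
      by (rule DERIV_fun_powr[OF dat[OF r] fpos])
    from DERIV_mult[OF this dG[OF r]] show ?thesis
      unfolding f2_def by (subst Peq) (simp add: algebra_simps)
  qed
  have c2: "continuous_on {0<..<e} f2"
  proof -
    have sub: "{0<..<e} \<subseteq> {0..e}" by auto
    have cf2: "continuous_on {0<..<e} f" using continuous_on_subset[OF cf] by auto
    have "continuous_on {0<..<e} Gd" unfolding Gd_def
      by (intro continuous_intros cf2 continuous_on_subset[OF cP sub] continuous_on_subset[OF cA sub]) auto
    then show ?thesis unfolding f2_def
      by (intro continuous_intros cf2 continuous_on_subset[OF cP sub] continuous_on_subset[OF cG sub]
            continuous_on_powr) (auto simp: fpos less_imp_neq[symmetric])
  qed
  have f0: "f 0 = eta" using fi[of 0] e by simp
  have f'0: "?P 0 = 0" unfolding Phi_def Gop_def using k by simp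
  have dg: "((\<lambda>s. f s powr m / m) has_real_derivative ?G s) (at s)" if s: "s \<in> {0<..<e}" for s
  proof -
    have "((\<lambda>s. f s powr m) has_real_derivative m * f s powr (m - of_nat 1) * ?P s) (at s)"
      by (rule DERIV_fun_powr[OF dat[OF s] fpos])
    then have "((\<lambda>s. f s powr m / m) has_real_derivative m * f s powr (m - of_nat 1) * ?P s / m) (at s)"
      by (rule DERIV_cdivide)
    moreover have "m * f s powr (m - of_nat 1) * ?P s / m = ?G s"
    proof -
      have "f s powr (m-1) * f s powr (1-m) = 1" using powr_inv_pair[OF fpos, of s m] by (simp add: mult.commute)
      then show ?thesis using m unfolding Phi_def by (simp add: mult.assoc[symmetric])
    qed
    ultimately show ?thesis by simp
  qed
  have deriv1: "deriv (\<lambda>s. f s powr m / m) s = ?G s" if "s \<in> {0<..<e}" for s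
    using dg[OF that] by (rule DERIV_imp_deriv)
  have deriv2: "deriv (deriv (\<lambda>s. f s powr m / m)) s = Gd s" if "s \<in> {0<..<e}" for s
  proof -
    have "(deriv (\<lambda>s. f s powr m / m) has_real_derivative Gd s) (at s)"
      by (rule has_field_derivative_transform_within_open[OF dG[OF that], of "{0<..<e}"])
         (use that deriv1 in auto)
    then show ?thesis by (rule DERIV_imp_deriv)
  qed
  have ode: "deriv (deriv (\<lambda>s. f s powr m / m)) r
           + (real n - 1) / r * deriv (\<lambda>s. f s powr m / m) r
           + alpha * f r + beta * r * ?P r = 0" if r: "r \<in> {0<..<e}" for r
  proof -
    have r0: "r > 0" using r by auto
    show ?thesis unfolding deriv1[OF r] deriv2[OF r] Gd_def Gop_def gam
      using r0 unfolding k by (simp add: field_simps)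
  qed
  have cP': "continuous_on {0..<e} ?P" by (rule continuous_on_subset[OF cP]) auto
  have X: "(\<forall>r\<in>{0..<e}. (f has_real_derivative ?P r) (at r within {0..<e})) \<and>
        continuous_on {0..<e} ?P \<and>
        (\<forall>r\<in>{0<..<e}. (?P has_real_derivative f2 r) (at r)) \<and>
        continuous_on {0<..<e} f2 \<and>
        f 0 = eta \<and> ?P 0 = 0 \<and>
        (\<forall>r\<in>{0<..<e}.
           deriv (deriv (\<lambda>s. f s powr m / m)) r
           + (real n - 1) / r * deriv (\<lambda>s. f s powr m / m) r
           + alpha * f r + beta * r * ?P r = 0)"
    using d1' cP' d2 c2 f0 f'0 ode by blast
  show ?thesis
    unfolding radial_sol_def using fpos X by blast
qed


lemma choose_eps:
  fixes M K eta :: real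
  assumes "M \<ge> 0" "K \<ge> 0" "eta > 0"
  shows "\<exists>e. 0 < e \<and> e \<le> 1 \<and> e * M \<le> eta/4 \<and> e * K \<le> 1/2"
proof -
  define e where "e = min 1 (min (eta/(4*(M+1))) (1/(2*(K+1))))"
  have e0: "0 < e" unfolding e_def using assms by simp
  have e1: "e \<le> eta/(4*(M+1))" "e \<le> 1/(2*(K+1))" "e \<le> 1" unfolding e_def by auto
  have "e * M \<le> e * (M+1)" using e0 by simp
  also have "\<dots> \<le> eta/(4*(M+1)) * (M+1)" using e1 assms by (intro mult_right_mono) auto
  also have "\<dots> = eta/4" using assms by (simp add: field_simps)
  finally have a: "e * M \<le> eta/4" .
  have "e * K \<le> e * (K+1)" using e0 by simp
  also have "\<dots> \<le> 1/(2*(K+1)) * (K+1)" using e1 assms by (intro mult_right_mono) auto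
  also have "\<dots> = 1/2" using assms by (simp add: field_simps)
  finally have b: "e * K \<le> 1/2" .
  show ?thesis using e0 e1 a b by blast
qed

theorem lemma2p1:
  fixes n :: nat and m eta0 rho1 beta alpha :: real
  assumes "n \<ge> 3"
    and "0 < m" and "m < (real n - 2) / real n"
    and "eta0 > 0" and "rho1 > 0"
    and "beta < m * rho1 / (real n - 2 - real n * m)"
    and "alpha = (2 * beta + rho1) / (1 - m)"
  shows "\<exists>eps>0. (\<exists>f. radial_sol n m alpha beta eta0 eps f) \<and>
           (\<forall>f g. radial_sol n m alpha beta eta0 eps f \<and> radial_sol n m alpha beta eta0 eps g
                  \<longrightarrow> (\<forall>r\<in>{0..<eps}. f r = g r))"
proof -
  have n: "n \<ge> 3" and n2: "n \<ge> 2" using assms(1) by auto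
  have npos: "real n > 0" using n by simp
  have m1: "m < 1"
  proof -
    have "(real n - 2) / real n < 1" using npos by (simp add: divide_less_eq)
    then show ?thesis using assms(3) by linarith
  qed
  have m: "0 < m" "m < 1" using assms(2) m1 by auto
  have eta: "eta0 > 0" by fact
  define gam where "gam = alpha - real n * beta"
  obtain e where e: "0 < e" "e \<le> 1" "e * Mc m beta gam eta0 \<le> eta0/4" "e * Kc m beta gam eta0 \<le> 1/2"
    using choose_eps[OF Mc_nonneg[OF eta] Kc_nonneg[OF eta] eta] by blast
  obtain f where f: "continuous_on UNIV f" "\<forall>x. eta0/2 \<le> f x \<and> f x \<le> 2*eta0"
      "\<forall>x\<in>{0..e}. f x = eta0 + integral {0..x} (Phi n m beta gam f)"
    using exists_fixed[OF n2 m eta e] by blast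
  have sol: "radial_sol n m alpha beta eta0 e f"
    by (rule fixed_is_sol[OF n m eta e(1) f(1)]) (use f gam_def in auto)
  show ?thesis
  proof (intro exI[of _ e] conjI allI impI)
    show "0 < e" by fact
    show "\<exists>f. radial_sol n m alpha beta eta0 e f" using sol by blast
    fix f g assume "radial_sol n m alpha beta eta0 e f \<and> radial_sol n m alpha beta eta0 e g"
    then show "\<forall>r\<in>{0..<e}. f r = g r"
      using uniq[OF n m eta _ _ e(2)] e(3,4) unfolding gam_def by blast
  qed
qed

end
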